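(* Let $0<\gamma<1$ and let $\Pi$ be a deterministic communication protocol on $\{0,1\}^n\times\{0,1\}^n$ of depth $d$. Then there exists a $\gamma$-subcube-like protocol $\tilde\Pi$ (whose protocol tree need not be binary and may be undefined on some inputs) of depth at most $d$ and codimension $\mathrm{codim}(\tilde\Pi)\le \frac{7}{1-\gamma}\, d$ such that \[ \Pr_{(\bm x,\bm y)\sim\{0,1\}^n\times\{0,1\}^n}\big[\Pi(\bm x,\bm y)\ne\tilde\Pi(\bm x,\bm y)\big]\le e^{-d}, \] where inputs on which $\tilde\Pi$ is undefined count as disagreements.
   Context: A (generalized) protocol is a rooted tree in which each node $v$ is associated with a rectangle $R_v=X_v\times Y_v\subseteq\{0,1\}^n\times\{0,1\}^n$, the root with a subset of the full input space, and at each internal node one player partitions her/his side: the children's rectangles are of the form $X'\times Y_v$ (Alice speaks) or $X_v\times Y'$ (Bob speaks) and are disjoint; leaves are labelled with outputs, and $\tilde\Pi(x,y)$ is the label of the leaf containing $(x,y)$. Min-entropy: $\mathbf H_\infty(\bm x)=\min_x\log(1/\Pr[\bm x=x])$. A random $\bm x\in\{0,1\}^n$ is $\gamma$-spread if $\mathbf H_\infty(\bm x_I)\ge\gamma|I|$ for every $I\subseteq[n]$. It is $(I,\gamma)$-structured if $\bm x_I$ is constant (fixed to some $a_I$) with probability 1 and $\bm x_{[n]\setminus I}$ is $\gamma$-spread. A rectangle $X\times Y$ is $\gamma$-subcube-like w.r.t. $(I,J)$ if $\bm x\sim X$ (uniform) is $(I,\gamma)$-structured and $\bm y\sim Y$ is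 $(J,\gamma)$-structured; write $\mathrm{fix}(X)=I$, $\mathrm{fix}(Y)=J$ and $\mathrm{codim}(X\times Y)=|I|+|J|$. A protocol is $\gamma$-subcube-like if every node rectangle is $\gamma$-subcube-like; its codimension is the maximum codimension of its node rectangles. *)

theory Defs
  imports Complex_Main
begin

text \<open>Bit strings in {0,1}^n are boolean lists of length n; coordinates are 0..<n.\<close>

definition cube :: "nat \<Rightarrow> bool list set" where
  "cube n = {x. length x = n}"

datatype 'o proto =
    Leaf 'o
  | ANode "bool list \<Rightarrow> bool" "'o proto" "'o proto"   \<comment> \<open>Alice speaks a bit depending on x\<close>
  | BNode "bool list \<Rightarrow> bool" "'o proto" "'o proto"   \<comment> \<open>Bob speaks a bit depending on y\<close>

fun depth :: "'o proto \<Rightarrow> nat" where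
  "depth (Leaf _) = 0"
| "depth (ANode _ l r) = Suc (max (depth l) (depth r))"
| "depth (BNode _ l r) = Suc (max (depth l) (depth r))"

fun eval :: "'o proto \<Rightarrow> bool list \<Rightarrow> bool list \<Rightarrow> 'o" where
  "eval (Leaf v) x y = v"
| "eval (ANode f l r) x y = (if f x then eval l x y else eval r x y)"
| "eval (BNode g l r) x y = (if g y then eval l x y else eval r x y)"

text \<open>A node stores its rectangle X_v \<times> Y_v; leaves additionally store their label;
  internal nodes have an arbitrary (finite) list of children.\<close>

datatype 'o gproto =
    GLeaf "bool list set" "bool list set" 'o
  | GNode "bool list set" "bool list set" "'o gproto list"

fun rectX :: "'o gproto \<Rightarrow> bool list set" where
  "rectX (GLeaf X _ _) = X" | "rectX (GNode X _ _) = X"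

fun rectY :: "'o gproto \<Rightarrow> bool list set" where
  "rectY (GLeaf _ Y _) = Y" | "rectY (GNode _ Y _) = Y"

definition alice_split :: "bool list set \<Rightarrow> bool list set \<Rightarrow> 'o gproto list \<Rightarrow> bool" where
  "alice_split X Y ts \<longleftrightarrow>
     (\<forall>t\<in>set ts. rectY t = Y \<and> rectX t \<subseteq> X) \<and>
     (\<forall>i<length ts. \<forall>j<length ts. i \<noteq> j \<longrightarrow> rectX (ts ! i) \<inter> rectX (ts ! j) = {})"

definition bob_split :: "bool list set \<Rightarrow> bool list set \<Rightarrow> 'o gproto list \<Rightarrow> bool" where
  "bob_split X Y ts \<longleftrightarrow>
     (\<forall>t\<in>set ts. rectX t = X \<and> rectY t \<subseteq> Y) \<and>
     (\<forall>i<length ts. \<forall>j<length ts. i \<noteq> j \<longrightarrow> rectY (ts ! i) \<inter> rectY (ts ! j) = {})"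

fun wf_nodes :: "'o gproto \<Rightarrow> bool" where
  "wf_nodes (GLeaf _ _ _) = True"
| "wf_nodes (GNode X Y ts) =
     ((alice_split X Y ts \<or> bob_split X Y ts) \<and> (\<forall>t\<in>set ts. wf_nodes t))"

definition wf_gproto :: "nat \<Rightarrow> 'o gproto \<Rightarrow> bool" where
  "wf_gproto n T \<longleftrightarrow> rectX T \<subseteq> cube n \<and> rectY T \<subseteq> cube n \<and> wf_nodes T"

fun gdepth :: "'o gproto \<Rightarrow> nat" where
  "gdepth (GLeaf _ _ _) = 0"
| "gdepth (GNode _ _ ts) = Suc (Max (insert 0 (set (map gdepth ts))))"

fun node_rects :: "'o gproto \<Rightarrow> (bool list set \<times> bool list set) set" where
  "node_rects (GLeaf X Y _) = {(X, Y)}"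
| "node_rects (GNode X Y ts) = insert (X, Y) (\<Union> (set (map node_rects ts)))"

fun leaves :: "'o gproto \<Rightarrow> (bool list set \<times> bool list set \<times> 'o) set" where
  "leaves (GLeaf X Y v) = {(X, Y, v)}"
| "leaves (GNode X Y ts) = \<Union> (set (map leaves ts))"

text \<open>Output of a generalized protocol: the label of the leaf containing (x,y),
  or None (undefined) if no leaf contains (x,y).\<close>

definition geval :: "'o gproto \<Rightarrow> bool list \<Rightarrow> bool list \<Rightarrow> 'o option" where
  "geval T x y =
    (if \<exists>(X, Y, v)\<in>leaves T. x \<in> X \<and> y \<in> Y
     then Some (snd (snd (SOME l. l \<in> leaves T \<and> x \<in> fst l \<and> y \<in> fst (snd l))))
     else None)"

definition prob_restr :: "bool list set \<Rightarrow> nat set \<Rightarrow> bool list \<Rightarrow> real" where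
  "prob_restr X I z = real (card {x\<in>X. \<forall>i\<in>I. x ! i = z ! i}) / real (card X)"

text \<open>H_\<infinity>(x_I) for x uniform on X: minimum over the values actually attained.\<close>
definition min_entropy :: "bool list set \<Rightarrow> nat set \<Rightarrow> real" where
  "min_entropy X I = Min ((\<lambda>z. log 2 (1 / prob_restr X I z)) ` X)"

definition spread_on :: "nat \<Rightarrow> real \<Rightarrow> bool list set \<Rightarrow> nat set \<Rightarrow> bool" where
  "spread_on n \<gamma> X S \<longleftrightarrow> (\<forall>I\<subseteq>S. min_entropy X I \<ge> \<gamma> * real (card I))"

definition structured :: "nat \<Rightarrow> nat set \<Rightarrow> real \<Rightarrow> bool list set \<Rightarrow> bool" where
  "structured n I \<gamma> X \<longleftrightarrow>
     X \<noteq> {} \<and> X \<subseteq> cube n \<and> I \<subseteq> {..<n} \<and>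
     (\<forall>x\<in>X. \<forall>x'\<in>X. \<forall>i\<in>I. x ! i = x' ! i) \<and>
     spread_on n \<gamma> X ({..<n} - I)"

definition subcube_like_wrt ::
  "nat \<Rightarrow> real \<Rightarrow> bool list set \<Rightarrow> bool list set \<Rightarrow> nat set \<Rightarrow> nat set \<Rightarrow> bool" where
  "subcube_like_wrt n \<gamma> X Y I J \<longleftrightarrow> structured n I \<gamma> X \<and> structured n J \<gamma> Y"

definition subcube_like_codim_le :: "nat \<Rightarrow> real \<Rightarrow> 'o gproto \<Rightarrow> real \<Rightarrow> bool" where
  "subcube_like_codim_le n \<gamma> T k \<longleftrightarrow>
     (\<forall>(X, Y)\<in>node_rects T. \<exists>I J. subcube_like_wrt n \<gamma> X Y I J \<and> real (card I + card J) \<le> k)"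

end

theory Submission
  imports Defs
begin



lemma cube_eq: "cube n = {xs. set xs \<subseteq> (UNIV::bool set) \<and> length xs = n}"
  by (auto simp: cube_def)

lemma finite_cube: "finite (cube n)"
  unfolding cube_eq by (rule finite_lists_length_eq) simp

lemma card_cube: "card (cube n) = 2 ^ n"
  unfolding cube_eq by (subst card_lists_length_eq) simp_all

definition fixedon :: "bool list set \<Rightarrow> nat set \<Rightarrow> bool" where
  "fixedon X I \<longleftrightarrow> (\<forall>x\<in>X. \<forall>x'\<in>X. \<forall>i\<in>I. x ! i = x' ! i)"

lemma card_fixed_le:
  assumes "X \<subseteq> cube n" "I \<subseteq> {..<n}" "fixedon X I"
  shows "card X \<le> 2 ^ (n - card I)"
proof -
  define ks where "ks = sorted_list_of_set ({..<n} - I)"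
  have sks: "set ks = {..<n} - I" unfolding ks_def by simp
  have lks: "length ks = n - card I"
    unfolding ks_def using assms(2) by (simp add: card_Diff_subset finite_subset)
  define g where "g x = map (\<lambda>i. x ! i) ks" for x :: "bool list"
  have "inj_on g X"
  proof
    fix x x' assume xx: "x \<in> X" "x' \<in> X" "g x = g x'"
    show "x = x'"
    proof (rule nth_equalityI)
      show "length x = length x'" using xx assms(1) by (auto simp: cube_def)
      fix i assume "i < length x"
      then have i: "i < n" using xx assms(1) by (auto simp: cube_def)
      show "x ! i = x' ! i"
      proof (cases "i \<in> I")
        case True then show ?thesis using assms(3) xx unfolding fixedon_def by blast
      next
        case False
        then have "i \<in> set ks" using i sks by auto
        then show ?thesis using xx(3) unfolding g_def by (auto simp: map_eq_conv)
      qed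
    qed
  qed
  moreover have "g ` X \<subseteq> {xs. set xs \<subseteq> (UNIV :: bool set) \<and> length xs = n - card I}"
    by (auto simp: g_def lks)
  ultimately have "card X \<le> card {xs. set xs \<subseteq> (UNIV :: bool set) \<and> length xs = n - card I}"
    by (metis card_image card_mono finite_lists_length_eq finite_UNIV finite)
  also have "\<dots> = 2 ^ (n - card I)"
    by (subst card_lists_length_eq) simp_all
  finally show ?thesis .
qed

definition cnt :: "bool list set \<Rightarrow> nat set \<Rightarrow> bool list \<Rightarrow> nat" where
  "cnt X I z = card {x\<in>X. \<forall>i\<in>I. x ! i = z ! i}"

lemma spread_iff:
  assumes "finite X" "X \<noteq> {}"
  shows "spread_on n \<gamma> X S \<longleftrightarrow>
    (\<forall>I\<subseteq>S. \<forall>z\<in>X. real (cnt X I z) \<le> 2 powr (- \<gamma> * card I) * card X)"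
proof -
  have key: "\<gamma> * card I \<le> log 2 (1 / prob_restr X I z) \<longleftrightarrow>
      real (cnt X I z) \<le> 2 powr (- \<gamma> * card I) * card X" if z: "z \<in> X" for I z
  proof -
    have c0: "cnt X I z > 0" unfolding cnt_def using z assms(1)
      by (subst card_gt_0_iff) auto
    have cX: "card X > 0" using assms by auto
    have p: "prob_restr X I z = cnt X I z / card X"
      by (simp add: prob_restr_def cnt_def)
    have "\<gamma> * card I \<le> log 2 (1 / prob_restr X I z) \<longleftrightarrow> 2 powr (\<gamma> * card I) \<le> card X / cnt X I z"
      using c0 cX by (subst le_log_iff) (auto simp: p)
    also have "\<dots> \<longleftrightarrow> 2 powr (\<gamma> * card I) * cnt X I z \<le> card X"
      using c0 by (simp add: pos_le_divide_eq)
    also have "\<dots> \<longleftrightarrow> real (cnt X I z) \<le> 2 powr (- \<gamma> * card I) * card X"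
    proof -
      have e: "2 powr (- \<gamma> * card I) * 2 powr (\<gamma> * card I) = 1"
        by (simp add: powr_add[symmetric])
      have "2 powr (\<gamma> * card I) * cnt X I z \<le> card X \<longleftrightarrow>
         2 powr (- \<gamma> * card I) * (2 powr (\<gamma> * card I) * cnt X I z) \<le> 2 powr (- \<gamma> * card I) * card X"
        by (rule mult_le_cancel_left_pos[symmetric]) simp
      also have "\<dots> \<longleftrightarrow> real (cnt X I z) \<le> 2 powr (- \<gamma> * card I) * card X"
        by (simp only: mult.assoc[symmetric] e mult_1_left)
      finally show ?thesis .
    qed
    finally show ?thesis .
  qed
  have fin: "finite ((\<lambda>z. log 2 (1 / prob_restr X I z)) ` X)" for I using assms(1) by simp
  show ?thesis unfolding spread_on_def min_entropy_def
    using assms(2) key by (simp add: Min_ge_iff[OF fin])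
qed




fun good_part :: "nat \<Rightarrow> real \<Rightarrow> nat set \<Rightarrow> bool list set \<Rightarrow> (bool list set \<times> nat set) list \<Rightarrow> bool" where
  "good_part n \<gamma> I X [] = (X = {})"
| "good_part n \<gamma> I X ((P, K) # L) =
    (P \<noteq> {} \<and> P \<subseteq> X \<and> K \<inter> I = {} \<and> structured n (I \<union> K) \<gamma> P \<and>
     real (card P) \<ge> 2 powr (- \<gamma> * card K) * card X \<and> good_part n \<gamma> I (X - P) L)"

lemma cnt_le_card: "finite X \<Longrightarrow> cnt X I z \<le> card X"
  unfolding cnt_def by (rule card_mono) auto

lemma density_restore:
  assumes "0 < \<gamma>" "\<gamma> < 1"
  shows "X \<subseteq> cube n \<Longrightarrow> I \<subseteq> {..<n} \<Longrightarrow> fixedon X I \<Longrightarrow> \<exists>L. good_part n \<gamma> I X L"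
proof (induction "card X" arbitrary: X rule: less_induct)
  case less
  show ?case
  proof (cases "X = {}")
    case True
    then show ?thesis by (intro exI[of _ "[]"]) simp
  next
    case Xne: False
    have finX: "finite X" using less.prems(1) finite_cube finite_subset by blast
    define rest where "rest = {..<n} - I"
    define viol where "viol K z \<longleftrightarrow> K \<subseteq> rest \<and> z \<in> X \<and>
        real (cnt X K z) > 2 powr (- \<gamma> * card K) * card X" for K z
    show ?thesis
    proof (cases "\<exists>K z. viol K z")
      case False
      have h: "\<forall>K\<subseteq>rest. \<forall>z\<in>X. real (cnt X K z) \<le> 2 powr (- \<gamma> * card K) * card X"
      proof (intro allI impI ballI)
        fix K z assume "K \<subseteq> rest" "z \<in> X"
        moreover have "\<not> viol K z" using False by blast
        ultimately show "real (cnt X K z) \<le> 2 powr (- \<gamma> * card K) * card X"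
          unfolding viol_def by linarith
      qed
      have "spread_on n \<gamma> X rest"
        unfolding spread_iff[OF finX Xne] by (rule h)
      then have sp: "spread_on n \<gamma> X ({..<n} - I)" unfolding rest_def .
      have "structured n (I \<union> {}) \<gamma> X"
        unfolding structured_def Un_empty_right
        using less.prems(1,2) less.prems(3)[unfolded fixedon_def] Xne sp by blast
      then show ?thesis using Xne by (intro exI[of _ "[(X, {})]"]) simp
    next
      case True
      define M where "M = {card K | K. \<exists>z. viol K z}"
      have "M \<subseteq> {..n}"
      proof
        fix m assume "m \<in> M"
        then obtain K z where "m = card K" "viol K z" unfolding M_def by blast
        then have "K \<subseteq> {..<n}" unfolding viol_def rest_def by blast
        then have "card K \<le> card {..<n}" by (intro card_mono) simp_all
        then show "m \<in> {..n}" using \<open>m = card K\<close> by simp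
      qed
      then have finM: "finite M" by (rule finite_subset) simp
      have "M \<noteq> {}" using True M_def by auto
      then have "Max M \<in> M" using finM by simp
      then obtain K z where vz: "viol K z" and cK: "card K = Max M" unfolding M_def by auto
      have maxK: "card K' \<le> card K" if "viol K' z'" for K' z'
        using that finM unfolding cK M_def by (intro Max_ge) auto
      define P where "P = {x\<in>X. \<forall>i\<in>K. x ! i = z ! i}"
      have zP: "z \<in> P" using vz unfolding P_def viol_def by auto
      have PX: "P \<subseteq> X" unfolding P_def by auto
      have cP: "real (card P) > 2 powr (- \<gamma> * card K) * card X"
        using vz unfolding viol_def cnt_def P_def by simp
      have KI: "K \<inter> I = {}" "K \<subseteq> {..<n}" using vz unfolding viol_def rest_def by auto
      have finK: "finite K" using KI(2) finite_subset by blast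
      have finP: "finite P" using PX finX finite_subset by blast
      have Pne: "P \<noteq> {}" using zP by blast
      have fixP: "\<forall>x\<in>P. \<forall>x'\<in>P. \<forall>i\<in>I \<union> K. x ! i = x' ! i"
        using less.prems(3) PX unfolding fixedon_def P_def by auto
      have "spread_on n \<gamma> P ({..<n} - (I \<union> K))"
        unfolding spread_iff[OF finP Pne]
      proof (intro allI impI ballI)
        fix K' w assume K': "K' \<subseteq> {..<n} - (I \<union> K)" and wP: "w \<in> P"
        show "real (cnt P K' w) \<le> 2 powr (- \<gamma> * card K') * card P"
        proof (rule ccontr)
          assume c: "\<not> ?thesis"
          have "K' \<noteq> {}"
          proof
            assume "K' = {}"
            then have "cnt P K' w = card P" unfolding cnt_def by simp
            then show False using c \<open>K' = {}\<close> by simp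
          qed
          have finK': "finite K'" using K' finite_subset by blast
          have disj: "K \<inter> K' = {}" using K' by auto
          have ceq: "cnt X (K \<union> K') w = cnt P K' w"
          proof -
            have "{x\<in>X. \<forall>i\<in>K \<union> K'. x ! i = w ! i} = {x\<in>P. \<forall>i\<in>K'. x ! i = w ! i}"
              using wP unfolding P_def by auto
            then show ?thesis unfolding cnt_def by simp
          qed
          have cu: "card (K \<union> K') = card K + card K'"
            using card_Un_disjoint[OF finK finK' disj] .
          have "2 powr (- \<gamma> * card (K \<union> K')) * card X
              = 2 powr (- \<gamma> * card K') * (2 powr (- \<gamma> * card K) * card X)"
            by (simp add: cu powr_add[symmetric] algebra_simps)
          also have "\<dots> < 2 powr (- \<gamma> * card K') * card P"
            using cP by simp
          also have "\<dots> < cnt X (K \<union> K') w" using c ceq by simp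
          finally have lt: "2 powr (- \<gamma> * card (K \<union> K')) * card X < cnt X (K \<union> K') w" .
          have "K \<union> K' \<subseteq> rest" using K' vz unfolding viol_def rest_def by blast
          then have "viol (K \<union> K') w"
            unfolding viol_def using lt wP PX by blast
          then have "card (K \<union> K') \<le> card K" by (rule maxK)
          moreover have "card K' > 0" using \<open>K' \<noteq> {}\<close> finK' by auto
          ultimately show False using cu by simp
        qed
      qed
      then have stP: "structured n (I \<union> K) \<gamma> P"
        unfolding structured_def using zP less.prems(1,2) PX fixP KI(2) by blast
      have "X - P \<subset> X" using zP PX by blast
      then have "card (X - P) < card X" using finX by (rule psubset_card_mono[rotated])
      moreover have "X - P \<subseteq> cube n" using less.prems(1) by blast
      moreover have "fixedon (X - P) I"
        using less.prems(3) unfolding fixedon_def by blast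
      ultimately obtain L where "good_part n \<gamma> I (X - P) L"
        using less.hyps less.prems(2) by blast
      then have "good_part n \<gamma> I X ((P, K) # L)"
        unfolding good_part.simps using zP PX KI(1) stP less_imp_le[OF cP] by blast
      then show ?thesis by blast
    qed
  qed
qed




definition cov :: "'o gproto \<Rightarrow> (bool list \<times> bool list) set" where
  "cov T = {(x, y). \<exists>(X', Y', v)\<in>leaves T. x \<in> X' \<and> y \<in> Y'}"

definition covs :: "'o gproto list \<Rightarrow> (bool list \<times> bool list) set" where
  "covs ts = \<Union> (cov ` set ts)"

lemma cov_GNode: "cov (GNode X Y ts) = covs ts"
  unfolding cov_def covs_def by auto

lemma covs_Cons: "covs (t # ts) = cov t \<union> covs ts"
  unfolding covs_def by simp

lemma covs_append: "covs (ts @ ts') = covs ts \<union> covs ts'"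
  unfolding covs_def by auto

lemma cov_GLeaf: "cov (GLeaf X Y v) = X \<times> Y"
  unfolding cov_def by auto

fun disjA :: "'o gproto list \<Rightarrow> bool" where
  "disjA [] = True"
| "disjA (t # ts) = ((\<forall>t'\<in>set ts. rectX t \<inter> rectX t' = {}) \<and> disjA ts)"

fun disjB :: "'o gproto list \<Rightarrow> bool" where
  "disjB [] = True"
| "disjB (t # ts) = ((\<forall>t'\<in>set ts. rectY t \<inter> rectY t' = {}) \<and> disjB ts)"

lemma disjA_nth: "disjA ts \<Longrightarrow> i < length ts \<Longrightarrow> j < length ts \<Longrightarrow> i \<noteq> j \<Longrightarrow>
   rectX (ts ! i) \<inter> rectX (ts ! j) = {}"
proof (induction ts arbitrary: i j)
  case Nil then show ?case by simp
next
  case (Cons t ts)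
  show ?case
  proof (cases i)
    case 0
    then obtain j' where "j = Suc j'" using Cons.prems by (cases j) auto
    then show ?thesis using Cons.prems 0 by auto
  next
    case (Suc i')
    show ?thesis
    proof (cases j)
      case 0 then show ?thesis using Cons.prems Suc by auto
    next
      case (Suc j')
      then show ?thesis using Cons \<open>i = Suc i'\<close> by auto
    qed
  qed
qed

lemma disjB_nth: "disjB ts \<Longrightarrow> i < length ts \<Longrightarrow> j < length ts \<Longrightarrow> i \<noteq> j \<Longrightarrow>
   rectY (ts ! i) \<inter> rectY (ts ! j) = {}"
proof (induction ts arbitrary: i j)
  case Nil then show ?case by simp
next
  case (Cons t ts)
  show ?case
  proof (cases i)
    case 0
    then obtain j' where "j = Suc j'" using Cons.prems by (cases j) auto
    then show ?thesis using Cons.prems 0 by auto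
  next
    case (Suc i')
    show ?thesis
    proof (cases j)
      case 0 then show ?thesis using Cons.prems Suc by auto
    next
      case (Suc j')
      then show ?thesis using Cons \<open>i = Suc i'\<close> by auto
    qed
  qed
qed

lemma disjA_append: "disjA ts \<Longrightarrow> disjA ts' \<Longrightarrow> (\<forall>t\<in>set ts. \<forall>t'\<in>set ts'. rectX t \<inter> rectX t' = {})
   \<Longrightarrow> disjA (ts @ ts')"
  by (induction ts) auto

lemma disjB_append: "disjB ts \<Longrightarrow> disjB ts' \<Longrightarrow> (\<forall>t\<in>set ts. \<forall>t'\<in>set ts'. rectY t \<inter> rectY t' = {})
   \<Longrightarrow> disjB (ts @ ts')"
  by (induction ts) auto

definition rho :: "nat \<Rightarrow> bool list set \<Rightarrow> nat set \<Rightarrow> real" where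
  "rho n X I = real (card X) * 2 powr (real (card I) - real n)"

lemma rho_nonneg: "rho n X I \<ge> 0"
  unfolding rho_def by simp

lemma rho_le1:
  assumes "structured n I \<gamma> X"
  shows "rho n X I \<le> 1"
proof -
  have a: "X \<subseteq> cube n" "I \<subseteq> {..<n}" "fixedon X I"
    using assms unfolding structured_def fixedon_def by (blast+)
  have cI: "card I \<le> n" using card_mono[OF _ a(2)] by simp
  have "real (card X) \<le> real (2 ^ (n - card I))"
    using card_fixed_le[OF a] by (simp only: of_nat_le_iff)
  also have "\<dots> = 2 powr (real (n - card I))"
    by (simp add: powr_realpow)
  also have "\<dots> = 2 powr (real n - real (card I))"
    using cI by (simp only: of_nat_diff)
  finally have "rho n X I \<le> 2 powr (real n - real (card I)) * 2 powr (real (card I) - real n)"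
    unfolding rho_def by (rule mult_right_mono) simp
  also have "\<dots> = 1" by (simp add: powr_add[symmetric])
  finally show ?thesis .
qed

definition inv :: "nat \<Rightarrow> real \<Rightarrow> real \<Rightarrow> bool list set \<Rightarrow> nat set \<Rightarrow> bool list set \<Rightarrow> nat set \<Rightarrow> real \<Rightarrow> bool" where
  "inv n \<gamma> B0 X I Y J B \<longleftrightarrow>
     2 powr ((1 - \<gamma>) * (real (card I) + real (card J))) * B \<le> rho n X I * rho n Y J * B0"

lemma codim_ok:
  assumes "\<gamma> < 1" "structured n I \<gamma> X" "structured n J \<gamma> Y" "1 \<le> B" "inv n \<gamma> B0 X I Y J B"
  shows "real (card I + card J) \<le> log 2 B0 / (1 - \<gamma>)"
proof -
  define e where "e = (1 - \<gamma>) * (real (card I) + real (card J))"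
  have r: "rho n X I * rho n Y J \<le> 1"
    using rho_le1[OF assms(2)] rho_le1[OF assms(3)] rho_nonneg
    by (intro mult_le_one) auto
  have "2 powr e \<le> 2 powr e * B" using assms(4) by simp
  also have "\<dots> \<le> rho n X I * rho n Y J * B0" using assms(5) unfolding inv_def e_def .
  finally have h: "2 powr e \<le> rho n X I * rho n Y J * B0" .
  then have "0 < rho n X I * rho n Y J * B0" using powr_gt_zero[of 2 e] by linarith
  moreover have rr: "rho n X I * rho n Y J \<ge> 0" using rho_nonneg by simp
  ultimately have B0: "B0 > 0" using zero_less_mult_iff[of "rho n X I * rho n Y J" B0] by linarith
  have "rho n X I * rho n Y J * B0 \<le> B0" using r B0 rr by (intro mult_left_le_one_le) auto
  with h have "2 powr e \<le> B0" by linarith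
  then have "e \<le> log 2 B0" using B0 by (subst le_log_iff) auto
  then show ?thesis using assms(1) unfolding e_def by (simp add: pos_le_divide_eq mult.commute)
qed




lemma sqrt_amgm: "0 \<le> a \<Longrightarrow> 0 \<le> b \<Longrightarrow> 2 * (sqrt a * sqrt b) \<le> a + b"
proof -
  assume a: "0 \<le> a" "0 \<le> b"
  have "0 \<le> (sqrt a - sqrt b)^2" by simp
  also have "\<dots> = a + b - 2 * (sqrt a * sqrt b)"
    using a by (simp add: power2_eq_square algebra_simps)
  finally show ?thesis by simp
qed

lemma num1:
  fixes a b :: real
  assumes "0 < a" "0 \<le> b" "b \<le> a"
  shows "(a - b) / sqrt a + 2 * sqrt b \<le> 2 * sqrt a"
proof -
  have sa: "sqrt a > 0" using assms by simp
  have "(a - b) / sqrt a + 2 * sqrt b = (a - b + 2 * (sqrt a * sqrt b)) / sqrt a"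
    using sa by (simp add: field_simps)
  also have "\<dots> \<le> (a - b + (a + b)) / sqrt a"
    using sqrt_amgm[of a b] assms sa by (intro divide_right_mono) auto
  also have "\<dots> = 2 * (sqrt a * sqrt a) / sqrt a" using assms by simp
  also have "\<dots> = 2 * sqrt a"
  proof -
    have gen: "\<And>t::real. t > 0 \<Longrightarrow> 2 * (t * t) / t = 2 * t" by simp
    show ?thesis by (rule gen[OF sa])
  qed
  finally show ?thesis .
qed

lemma num_step:
  fixes y c x B s p :: real
  assumes "0 \<le> y" "0 \<le> c" "0 < x" "0 < B" "0 < p" "p \<le> s"
  shows "p * y * c / sqrt (B * s / x) + y * c * sqrt x / sqrt B * (2 * sqrt (s - p))
         \<le> y * c * sqrt x / sqrt B * (2 * sqrt s)"
proof -
  have s: "0 < s" using assms by simp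
  define F where "F = y * c * sqrt x / sqrt B"
  have F: "0 \<le> F" unfolding F_def using assms by simp
  have "sqrt (B * s / x) = sqrt B * sqrt s / sqrt x" by (simp add: real_sqrt_mult real_sqrt_divide)
  then have "p * y * c / sqrt (B * s / x) = F * (p / sqrt s)"
    unfolding F_def using assms s by (simp add: field_simps)
  then have "p * y * c / sqrt (B * s / x) + y * c * sqrt x / sqrt B * (2 * sqrt (s - p))
      = F * ((s - (s - p)) / sqrt s + 2 * sqrt (s - p))" unfolding F_def by (simp add: algebra_simps)
  also have "\<dots> \<le> F * (2 * sqrt s)"
    using num1[of s "s - p"] assms s F by (intro mult_left_mono) auto
  finally show ?thesis unfolding F_def .
qed

lemma num2:
  fixes y x a b B cl cr C :: real
  assumes "0 \<le> y" "x = a + b" "0 \<le> a" "0 \<le> b" "0 < B" "0 \<le> cl" "0 \<le> cr" "cl \<le> C" "cr \<le> C"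
  shows "y * cl * sqrt x / sqrt B * (2 * sqrt a) + y * cr * sqrt x / sqrt B * (2 * sqrt b)
        \<le> x * y * (3 * C) / sqrt B"
proof -
  define F where "F = y * C * sqrt x / sqrt B"
  have F: "0 \<le> F" unfolding F_def using assms by simp
  have sa: "0 \<le> sqrt a" "0 \<le> sqrt b" using assms by auto
  have "y * cl * sqrt x / sqrt B * (2 * sqrt a) \<le> F * (2 * sqrt a)"
    unfolding F_def using assms sa
    by (intro mult_right_mono divide_right_mono mult_right_mono mult_left_mono) auto
  moreover have "y * cr * sqrt x / sqrt B * (2 * sqrt b) \<le> F * (2 * sqrt b)"
    unfolding F_def using assms sa
    by (intro mult_right_mono divide_right_mono mult_right_mono mult_left_mono) auto
  moreover have "2 * sqrt a + 2 * sqrt b \<le> 3 * sqrt x"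
  proof (rule power2_le_imp_le)
    have "(2 * sqrt a + 2 * sqrt b)^2 = 4 * (sqrt a)^2 + 4 * (sqrt b)^2 + 8 * (sqrt a * sqrt b)"
      by algebra
    also have "\<dots> = 4 * (a + b) + 8 * (sqrt a * sqrt b)"
      using assms by simp
    also have "\<dots> \<le> 4 * (a + b) + 4 * (a + b)"
    proof -
      have "4 * (2 * (sqrt a * sqrt b)) \<le> 4 * (a + b)"
        using sqrt_amgm[of a b, OF assms(3,4)] by (rule mult_left_mono) simp
      then show ?thesis by simp
    qed
    also have "\<dots> \<le> (3 * sqrt x)^2" using assms by (simp add: power_mult_distrib)
    finally show "(2 * sqrt a + 2 * sqrt b)^2 \<le> (3 * sqrt x)^2" .
    show "0 \<le> 3 * sqrt x" using assms by simp
  qed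
  ultimately have "y * cl * sqrt x / sqrt B * (2 * sqrt a) + y * cr * sqrt x / sqrt B * (2 * sqrt b)
      \<le> F * (3 * sqrt x)"
    using F by (smt (verit) distrib_left mult_left_mono)
  also have "\<dots> = x * y * (3 * C) / sqrt B"
    unfolding F_def using assms by (simp add: field_simps)
  finally show ?thesis .
qed

lemma inv_step:
  fixes g i j k n B B0 x p s rY :: real
  assumes "2 powr ((1 - g) * (i + j)) * B \<le> (x * 2 powr (i - n)) * rY * B0"
    "p \<ge> 2 powr (- g * k) * s" "x > 0" "rY \<ge> 0" "B0 \<ge> 0" "s \<ge> 0"
  shows "2 powr ((1 - g) * ((i + k) + j)) * (B * s / x) \<le> (p * 2 powr ((i + k) - n)) * rY * B0"
proof -
  have s1: "2 powr ((1 - g) * ((i + k) + j)) = 2 powr ((1 - g) * k) * 2 powr ((1 - g) * (i + j))"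
    by (simp add: powr_add[symmetric] algebra_simps)
  have "2 powr ((1 - g) * ((i + k) + j)) * (B * s / x)
      = (2 powr ((1 - g) * k) * s / x) * (2 powr ((1 - g) * (i + j)) * B)"
    unfolding s1 by (simp add: algebra_simps)
  also have "\<dots> \<le> (2 powr ((1 - g) * k) * s / x) * ((x * 2 powr (i - n)) * rY * B0)"
    using assms by (intro mult_left_mono) auto
  also have "\<dots> = (2 powr (- g * k) * s * 2 powr ((i + k) - n)) * rY * B0"
    using assms(3) by (simp add: powr_add[symmetric] field_simps)
  also have "\<dots> \<le> (p * 2 powr ((i + k) - n)) * rY * B0"
    using assms by (intro mult_right_mono) auto
  finally show ?thesis .
qed




lemma alice_list:
  fixes R :: "'o gproto \<Rightarrow> bool" and c :: real
  assumes c: "c \<ge> 1"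
    and IH: "\<And>P K B'. structured n (I \<union> K) \<gamma> P \<Longrightarrow> K \<inter> I = {} \<Longrightarrow> 1 \<le> B' \<Longrightarrow>
      inv n \<gamma> B0 P (I \<union> K) Y J B' \<Longrightarrow>
      \<exists>T. rectX T = P \<and> rectY T = Y \<and> R T \<and>
          real (card (P \<times> Y - cov T)) \<le> card P * card Y * c / sqrt B'"
    and finX: "finite X" and finY: "finite Y" and invX: "inv n \<gamma> B0 X I Y J B" and B: "1 \<le> B"
    and finI: "finite I" and B0: "B0 \<ge> 0"
  shows "good_part n \<gamma> I S L \<Longrightarrow> S \<subseteq> X \<Longrightarrow>
    \<exists>ts. (\<forall>t\<in>set ts. rectY t = Y \<and> rectX t \<subseteq> S \<and> R t) \<and> disjA ts \<and>
      real (card (S \<times> Y - covs ts)) \<le> card Y * c * sqrt (card X) / sqrt B * (2 * sqrt (card S))"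
proof (induction L arbitrary: S)
  case Nil
  then show ?case by (intro exI[of _ "[]"]) simp
next
  case (Cons PK L)
  obtain P K where PK: "PK = (P, K)" by fastforce
  have gp: "P \<noteq> {}" "P \<subseteq> S" "K \<inter> I = {}" "structured n (I \<union> K) \<gamma> P"
    "real (card P) \<ge> 2 powr (- \<gamma> * card K) * card S" "good_part n \<gamma> I (S - P) L"
    using Cons.prems(1) unfolding PK by auto
  obtain ts' where ts': "\<forall>t\<in>set ts'. rectY t = Y \<and> rectX t \<subseteq> S - P \<and> R t" "disjA ts'"
    "real (card ((S - P) \<times> Y - covs ts')) \<le> card Y * c * sqrt (card X) / sqrt B * (2 * sqrt (card (S - P)))"
    using Cons.IH[OF gp(6)] Cons.prems(2) by blast
  have finS: "finite S" using Cons.prems(2) finX finite_subset by blast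
  have finP: "finite P" using gp(2) finS finite_subset by blast
  have cP: "card P > 0" using gp(1) finP by auto
  have cPS: "card P \<le> card S" using gp(2) finS card_mono by blast
  have cX: "card X > 0" using gp(1,2) Cons.prems(2) finX
    by (metis card_gt_0_iff subset_empty)
  have cSP: "card (S - P) = card S - card P" using gp(2) finP by (simp add: card_Diff_subset)
  define B' where "B' = B * card S / card X"
  have B'pos: "B' > 0" unfolding B'_def using B cX cP cPS by simp
  have finK: "finite K" using gp(4) unfolding structured_def using finite_subset by blast
  have cIK: "real (card (I \<union> K)) = real (card I) + real (card K)"
    using card_Un_disjoint[OF finI finK] gp(3) by (simp add: Int_commute)
  have Pbound: "\<exists>ts. (\<forall>t\<in>set ts. rectY t = Y \<and> rectX t \<subseteq> S \<and> R t) \<and> disjA ts \<and>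
      (\<forall>t\<in>set ts. \<forall>t'\<in>set ts'. rectX t \<inter> rectX t' = {}) \<and>
      real (card (P \<times> Y - covs ts)) \<le> card P * card Y * c / sqrt B' \<and> length ts \<le> 1"
  proof (cases "1 \<le> B'")
    case True
    have "inv n \<gamma> B0 P (I \<union> K) Y J B'"
    proof -
      have h: "2 powr ((1 - \<gamma>) * (real (card I) + real (card J))) * B
          \<le> (real (card X) * 2 powr (real (card I) - real n)) * rho n Y J * B0"
        using invX unfolding inv_def rho_def .
      have "2 powr ((1 - \<gamma>) * ((real (card I) + real (card K)) + real (card J))) * (B * real (card S) / real (card X))
        \<le> (real (card P) * 2 powr ((real (card I) + real (card K)) - real n)) * rho n Y J * B0"
        by (rule inv_step[OF h gp(5)]) (use cX rho_nonneg B0 in auto)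
      then show ?thesis unfolding inv_def rho_def B'_def cIK .
    qed
    then obtain T where T: "rectX T = P" "rectY T = Y" "R T"
      "real (card (P \<times> Y - cov T)) \<le> card P * card Y * c / sqrt B'"
      using IH[OF gp(4) gp(3) True] by blast
    show ?thesis
      by (rule exI[of _ "[T]"]) (use T gp(2) ts'(1) in \<open>auto simp: covs_def\<close>)
  next
    case False
    have "real (card (P \<times> Y)) = real (card P) * real (card Y) * 1" by (simp add: card_cartesian_product)
    also have "\<dots> \<le> real (card P) * real (card Y) * (c / sqrt B')"
    proof (intro mult_left_mono)
      have "sqrt B' \<le> 1" using False by simp
      moreover have "sqrt B' > 0" using B'pos by simp
      ultimately have "1 \<le> 1 / sqrt B'" by simp
      also have "\<dots> \<le> c / sqrt B'" using c \<open>sqrt B' > 0\<close> by (simp add: divide_right_mono)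
      finally show "1 \<le> c / sqrt B'" .
    qed simp
    finally show ?thesis
      by (intro exI[of _ "[]"]) (simp add: covs_def)
  qed
  then obtain ts0 where ts0: "\<forall>t\<in>set ts0. rectY t = Y \<and> rectX t \<subseteq> S \<and> R t" "disjA ts0"
      "\<forall>t\<in>set ts0. \<forall>t'\<in>set ts'. rectX t \<inter> rectX t' = {}"
      "real (card (P \<times> Y - covs ts0)) \<le> card P * card Y * c / sqrt B'" by blast
  let ?ts = "ts0 @ ts'"
  have "S \<times> Y - covs ?ts \<subseteq> (P \<times> Y - covs ts0) \<union> ((S - P) \<times> Y - covs ts')"
    by (auto simp: covs_append)
  then have "card (S \<times> Y - covs ?ts) \<le> card ((P \<times> Y - covs ts0) \<union> ((S - P) \<times> Y - covs ts'))"
    by (rule card_mono[rotated]) (use finP finS finY in auto)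
  also have "\<dots> \<le> card (P \<times> Y - covs ts0) + card ((S - P) \<times> Y - covs ts')"
    by (rule card_Un_le)
  finally have "real (card (S \<times> Y - covs ?ts)) \<le>
      card P * card Y * c / sqrt B' + card Y * c * sqrt (card X) / sqrt B * (2 * sqrt (card (S - P)))"
    using ts0(4) ts'(3) by linarith
  also have "\<dots> \<le> card Y * c * sqrt (card X) / sqrt B * (2 * sqrt (card S))"
    unfolding B'_def using num_step[of "card Y" c "card X" B "card P" "card S"] cSP cP cX B cPS c
    by (simp add: of_nat_diff)
  finally have bnd: "real (card (S \<times> Y - covs ?ts)) \<le> card Y * c * sqrt (card X) / sqrt B * (2 * sqrt (card S))" .
  show ?case
  proof (intro exI[of _ ?ts] conjI)
    show "\<forall>t\<in>set ?ts. rectY t = Y \<and> rectX t \<subseteq> S \<and> R t" using ts0(1) ts'(1) by auto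
    show "disjA ?ts" using disjA_append[OF ts0(2) ts'(2) ts0(3)] .
  qed (rule bnd)
qed


lemma bob_list:
  fixes R :: "'o gproto \<Rightarrow> bool" and c :: real
  assumes c: "c \<ge> 1"
    and IH: "\<And>P K B'. structured n (J \<union> K) \<gamma> P \<Longrightarrow> K \<inter> J = {} \<Longrightarrow> 1 \<le> B' \<Longrightarrow>
      inv n \<gamma> B0 X I P (J \<union> K) B' \<Longrightarrow>
      \<exists>T. rectX T = X \<and> rectY T = P \<and> R T \<and>
          real (card (X \<times> P - cov T)) \<le> card X * card P * c / sqrt B'"
    and finX: "finite X" and finY: "finite Y" and invX: "inv n \<gamma> B0 X I Y J B" and B: "1 \<le> B"
    and finJ: "finite J" and B0: "B0 \<ge> 0"
  shows "good_part n \<gamma> J S L \<Longrightarrow> S \<subseteq> Y \<Longrightarrow>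
    \<exists>ts. (\<forall>t\<in>set ts. rectX t = X \<and> rectY t \<subseteq> S \<and> R t) \<and> disjB ts \<and>
      real (card (X \<times> S - covs ts)) \<le> card X * c * sqrt (card Y) / sqrt B * (2 * sqrt (card S))"
proof (induction L arbitrary: S)
  case Nil
  then show ?case by (intro exI[of _ "[]"]) simp
next
  case (Cons PK L)
  obtain P K where PK: "PK = (P, K)" by fastforce
  have gp: "P \<noteq> {}" "P \<subseteq> S" "K \<inter> J = {}" "structured n (J \<union> K) \<gamma> P"
    "real (card P) \<ge> 2 powr (- \<gamma> * card K) * card S" "good_part n \<gamma> J (S - P) L"
    using Cons.prems(1) unfolding PK by auto
  obtain ts' where ts': "\<forall>t\<in>set ts'. rectX t = X \<and> rectY t \<subseteq> S - P \<and> R t" "disjB ts'"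
    "real (card (X \<times> (S - P) - covs ts')) \<le> card X * c * sqrt (card Y) / sqrt B * (2 * sqrt (card (S - P)))"
    using Cons.IH[OF gp(6)] Cons.prems(2) by blast
  have finS: "finite S" using Cons.prems(2) finY finite_subset by blast
  have finP: "finite P" using gp(2) finS finite_subset by blast
  have cP: "card P > 0" using gp(1) finP by auto
  have cPS: "card P \<le> card S" using gp(2) finS card_mono by blast
  have cY: "card Y > 0" using gp(1,2) Cons.prems(2) finY
    by (metis card_gt_0_iff subset_empty)
  have cSP: "card (S - P) = card S - card P" using gp(2) finP by (simp add: card_Diff_subset)
  define B' where "B' = B * card S / card Y"
  have B'pos: "B' > 0" unfolding B'_def using B cY cP cPS by simp
  have finK: "finite K" using gp(4) unfolding structured_def using finite_subset by blast
  have cJK: "real (card (J \<union> K)) = real (card J) + real (card K)"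
    using card_Un_disjoint[OF finJ finK] gp(3) by (simp add: Int_commute)
  have Pbound: "\<exists>ts. (\<forall>t\<in>set ts. rectX t = X \<and> rectY t \<subseteq> S \<and> R t) \<and> disjB ts \<and>
      (\<forall>t\<in>set ts. \<forall>t'\<in>set ts'. rectY t \<inter> rectY t' = {}) \<and>
      real (card (X \<times> P - covs ts)) \<le> card X * card P * c / sqrt B' \<and> length ts \<le> 1"
  proof (cases "1 \<le> B'")
    case True
    have "inv n \<gamma> B0 X I P (J \<union> K) B'"
    proof -
      have h: "2 powr ((1 - \<gamma>) * (real (card J) + real (card I))) * B
          \<le> (real (card Y) * 2 powr (real (card J) - real n)) * rho n X I * B0"
        using invX unfolding inv_def rho_def by (simp add: ac_simps)
      have "2 powr ((1 - \<gamma>) * ((real (card J) + real (card K)) + real (card I))) * (B * real (card S) / real (card Y))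
        \<le> (real (card P) * 2 powr ((real (card J) + real (card K)) - real n)) * rho n X I * B0"
        by (rule inv_step[OF h gp(5)]) (use cY rho_nonneg B0 in auto)
      then show ?thesis unfolding inv_def rho_def B'_def cJK by (simp add: ac_simps)
    qed
    then obtain T where T: "rectX T = X" "rectY T = P" "R T"
      "real (card (X \<times> P - cov T)) \<le> card X * card P * c / sqrt B'"
      using IH[OF gp(4) gp(3) True] by blast
    show ?thesis
      by (rule exI[of _ "[T]"]) (use T gp(2) ts'(1) in \<open>auto simp: covs_def\<close>)
  next
    case False
    have "real (card (X \<times> P)) = real (card X) * real (card P) * 1" by (simp add: card_cartesian_product)
    also have "\<dots> \<le> real (card X) * real (card P) * (c / sqrt B')"
    proof (intro mult_left_mono)
      have "sqrt B' \<le> 1" using False by simp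
      moreover have "sqrt B' > 0" using B'pos by simp
      ultimately have "1 \<le> 1 / sqrt B'" by simp
      also have "\<dots> \<le> c / sqrt B'" using c \<open>sqrt B' > 0\<close> by (simp add: divide_right_mono)
      finally show "1 \<le> c / sqrt B'" .
    qed simp
    finally show ?thesis
      by (intro exI[of _ "[]"]) (simp add: covs_def)
  qed
  then obtain ts0 where ts0: "\<forall>t\<in>set ts0. rectX t = X \<and> rectY t \<subseteq> S \<and> R t" "disjB ts0"
      "\<forall>t\<in>set ts0. \<forall>t'\<in>set ts'. rectY t \<inter> rectY t' = {}"
      "real (card (X \<times> P - covs ts0)) \<le> card X * card P * c / sqrt B'" by blast
  let ?ts = "ts0 @ ts'"
  have "X \<times> S - covs ?ts \<subseteq> (X \<times> P - covs ts0) \<union> (X \<times> (S - P) - covs ts')"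
    by (auto simp: covs_append)
  then have "card (X \<times> S - covs ?ts) \<le> card ((X \<times> P - covs ts0) \<union> (X \<times> (S - P) - covs ts'))"
    by (rule card_mono[rotated]) (use finP finS finX in auto)
  also have "\<dots> \<le> card (X \<times> P - covs ts0) + card (X \<times> (S - P) - covs ts')"
    by (rule card_Un_le)
  finally have "real (card (X \<times> S - covs ?ts)) \<le>
      card P * card X * c / sqrt B' + card X * c * sqrt (card Y) / sqrt B * (2 * sqrt (card (S - P)))"
    using ts0(4) ts'(3) by (simp add: ac_simps)
  also have "\<dots> \<le> card X * c * sqrt (card Y) / sqrt B * (2 * sqrt (card S))"
    unfolding B'_def using num_step[of "card X" c "card Y" B "card P" "card S"] cSP cP cY B cPS c
    by (simp add: of_nat_diff)
  finally have bnd: "real (card (X \<times> S - covs ?ts)) \<le> card X * c * sqrt (card Y) / sqrt B * (2 * sqrt (card S))" .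
  show ?case
  proof (intro exI[of _ ?ts] conjI)
    show "\<forall>t\<in>set ?ts. rectX t = X \<and> rectY t \<subseteq> S \<and> R t" using ts0(1) ts'(1) by auto
    show "disjB ?ts" using disjB_append[OF ts0(2) ts'(2) ts0(3)] .
  qed (rule bnd)
qed




definition GT :: "nat \<Rightarrow> real \<Rightarrow> real \<Rightarrow> 'o proto \<Rightarrow> 'o gproto \<Rightarrow> bool" where
  "GT n \<gamma> B0 pr T \<longleftrightarrow> wf_nodes T \<and> gdepth T \<le> depth pr \<and>
     subcube_like_codim_le n \<gamma> T (log 2 B0 / (1 - \<gamma>)) \<and>
     (\<forall>(X', Y', v)\<in>leaves T. X' \<subseteq> rectX T \<and> Y' \<subseteq> rectY T \<and> (\<forall>x\<in>X'. \<forall>y\<in>Y'. v = eval pr x y))"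

lemma slc_GNode: "subcube_like_codim_le n \<gamma> (GNode X Y ts) k \<longleftrightarrow>
   (\<exists>I J. subcube_like_wrt n \<gamma> X Y I J \<and> real (card I + card J) \<le> k) \<and>
   (\<forall>t\<in>set ts. subcube_like_codim_le n \<gamma> t k)"
  unfolding subcube_like_codim_le_def by auto

lemma slc_GLeaf: "subcube_like_codim_le n \<gamma> (GLeaf X Y v) k \<longleftrightarrow>
   (\<exists>I J. subcube_like_wrt n \<gamma> X Y I J \<and> real (card I + card J) \<le> k)"
  unfolding subcube_like_codim_le_def by auto

lemma gdepth_GNode_le:
  assumes "\<forall>t\<in>set ts. gdepth t \<le> m"
  shows "gdepth (GNode X Y ts) \<le> Suc m"
proof -
  have "Max (insert 0 (set (map gdepth ts))) \<le> m"
    using assms by (subst Max_le_iff) auto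
  then show ?thesis by simp
qed

lemma struct_facts:
  assumes "structured n I \<gamma> X"
  shows "finite X" "finite I" "X \<subseteq> cube n" "I \<subseteq> {..<n}" "fixedon X I"
proof -
  show X: "X \<subseteq> cube n" "I \<subseteq> {..<n}" using assms unfolding structured_def by (blast+)
  show "finite X" using X(1) finite_cube finite_subset by blast
  show "finite I" using X(2) finite_subset by blast
  show "fixedon X I" using assms unfolding structured_def fixedon_def by blast
qed

lemma build:
  assumes g: "0 < \<gamma>" "\<gamma> < 1" and B0: "B0 \<ge> 0"
  shows "structured n I \<gamma> X \<Longrightarrow> structured n J \<gamma> Y \<Longrightarrow> 1 \<le> B \<Longrightarrow> inv n \<gamma> B0 X I Y J B \<Longrightarrow>
    \<exists>T. rectX T = X \<and> rectY T = Y \<and> GT n \<gamma> B0 pr T \<and>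
      real (card (X \<times> Y - cov T)) \<le> real (card X) * real (card Y) * 3 ^ depth pr / sqrt B"
proof (induction pr arbitrary: X Y I J B)
  case (Leaf v)
  have cod: "real (card I + card J) \<le> log 2 B0 / (1 - \<gamma>)"
    using codim_ok[OF g(2) Leaf.prems] .
  have "GT n \<gamma> B0 (Leaf v) (GLeaf X Y v)"
    unfolding GT_def slc_GLeaf subcube_like_wrt_def using cod Leaf.prems(1,2) by auto
  moreover have "0 \<le> real (card X) * real (card Y) * 3 ^ depth (Leaf v) / sqrt B" using Leaf.prems(3) by simp
  ultimately show ?case
    by (intro exI[of _ "GLeaf X Y v"]) (simp add: cov_GLeaf)
next
  case (ANode f l r)
  note sX = struct_facts[OF ANode.prems(1)] and sY = struct_facts[OF ANode.prems(2)]
  define X0 where "X0 = {x\<in>X. f x}"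
  define X1 where "X1 = {x\<in>X. \<not> f x}"
  have X01: "X0 \<subseteq> X" "X1 \<subseteq> X" "X0 \<inter> X1 = {}" "X0 \<union> X1 = X" unfolding X0_def X1_def by auto
  have fix01: "fixedon X0 I" "fixedon X1 I" using sX(5) X01 unfolding fixedon_def by (blast+)
  obtain L0 where L0: "good_part n \<gamma> I X0 L0"
    using density_restore[OF g _ sX(4) fix01(1)] X01 sX(3) by blast
  obtain L1 where L1: "good_part n \<gamma> I X1 L1"
    using density_restore[OF g _ sX(4) fix01(2)] X01 sX(3) by blast
  have IHl: "\<exists>T. rectX T = P \<and> rectY T = Y \<and> GT n \<gamma> B0 l T \<and>
          real (card (P \<times> Y - cov T)) \<le> real (card P * card Y) * 3 ^ depth l / sqrt B'"
    if "structured n (I \<union> K) \<gamma> P" "K \<inter> I = {}" "1 \<le> B'" "inv n \<gamma> B0 P (I \<union> K) Y J B'" for P K B'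
    using ANode.IH(1)[OF that(1) ANode.prems(2) that(3,4)] by simp
  have IHr: "\<exists>T. rectX T = P \<and> rectY T = Y \<and> GT n \<gamma> B0 r T \<and>
          real (card (P \<times> Y - cov T)) \<le> real (card P * card Y) * 3 ^ depth r / sqrt B'"
    if "structured n (I \<union> K) \<gamma> P" "K \<inter> I = {}" "1 \<le> B'" "inv n \<gamma> B0 P (I \<union> K) Y J B'" for P K B'
    using ANode.IH(2)[OF that(1) ANode.prems(2) that(3,4)] by simp
  have "\<exists>ts. (\<forall>t\<in>set ts. rectY t = Y \<and> rectX t \<subseteq> X0 \<and> GT n \<gamma> B0 l t) \<and> disjA ts \<and>
      real (card (X0 \<times> Y - covs ts)) \<le> real (card Y) * 3 ^ depth l * sqrt (card X) / sqrt B * (2 * sqrt (card X0))"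
    apply (rule alice_list[of "3 ^ depth l" n I \<gamma> B0 Y J "GT n \<gamma> B0 l" X B])
    apply simp
    apply (rule IHl; assumption)
    using sX(1) sY(1) ANode.prems(4,3) sX(2) B0 L0 X01(1) by auto
  then obtain ts0 where ts0: "\<forall>t\<in>set ts0. rectY t = Y \<and> rectX t \<subseteq> X0 \<and> GT n \<gamma> B0 l t" "disjA ts0"
      "real (card (X0 \<times> Y - covs ts0)) \<le> real (card Y) * 3 ^ depth l * sqrt (card X) / sqrt B * (2 * sqrt (card X0))"
    by blast
  have "\<exists>ts. (\<forall>t\<in>set ts. rectY t = Y \<and> rectX t \<subseteq> X1 \<and> GT n \<gamma> B0 r t) \<and> disjA ts \<and>
      real (card (X1 \<times> Y - covs ts)) \<le> real (card Y) * 3 ^ depth r * sqrt (card X) / sqrt B * (2 * sqrt (card X1))"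
    apply (rule alice_list[of "3 ^ depth r" n I \<gamma> B0 Y J "GT n \<gamma> B0 r" X B])
    apply simp
    apply (rule IHr; assumption)
    using sX(1) sY(1) ANode.prems(4,3) sX(2) B0 L1 X01(2) by auto
  then obtain ts1 where ts1: "\<forall>t\<in>set ts1. rectY t = Y \<and> rectX t \<subseteq> X1 \<and> GT n \<gamma> B0 r t" "disjA ts1"
      "real (card (X1 \<times> Y - covs ts1)) \<le> real (card Y) * 3 ^ depth r * sqrt (card X) / sqrt B * (2 * sqrt (card X1))"
    by blast
  define ts where "ts = ts0 @ ts1"
  define T where "T = GNode X Y ts"
  have dj: "disjA ts" unfolding ts_def
    by (rule disjA_append[OF ts0(2) ts1(2)]) (use ts0(1) ts1(1) X01(3) in blast)
  have split: "alice_split X Y ts"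
    unfolding alice_split_def
  proof (intro conjI)
    show "\<forall>t\<in>set ts. rectY t = Y \<and> rectX t \<subseteq> X" using ts0(1) ts1(1) X01 unfolding ts_def by auto
    show "\<forall>i<length ts. \<forall>j<length ts. i \<noteq> j \<longrightarrow> rectX (ts ! i) \<inter> rectX (ts ! j) = {}"
      using disjA_nth[OF dj] by blast
  qed
  have GTc: "\<forall>t\<in>set ts. GT n \<gamma> B0 l t \<or> GT n \<gamma> B0 r t" using ts0(1) ts1(1) unfolding ts_def by auto
  have wf: "wf_nodes T" unfolding T_def using split GTc unfolding GT_def by auto
  have dep: "gdepth T \<le> depth (ANode f l r)"
  proof -
    have "\<forall>t\<in>set ts. gdepth t \<le> max (depth l) (depth r)" using GTc unfolding GT_def by auto
    then show ?thesis unfolding T_def using gdepth_GNode_le by fastforce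
  qed
  have cod: "real (card I + card J) \<le> log 2 B0 / (1 - \<gamma>)"
    using codim_ok[OF g(2) ANode.prems] .
  have slc: "subcube_like_codim_le n \<gamma> T (log 2 B0 / (1 - \<gamma>))"
    unfolding T_def slc_GNode subcube_like_wrt_def using cod ANode.prems(1,2) GTc unfolding GT_def by blast
  have lv: "\<forall>(X', Y', v)\<in>leaves T. X' \<subseteq> rectX T \<and> Y' \<subseteq> rectY T \<and>
      (\<forall>x\<in>X'. \<forall>y\<in>Y'. v = eval (ANode f l r) x y)"
  proof (clarify)
    fix X' Y' v assume "(X', Y', v) \<in> leaves T"
    then obtain t where t: "t \<in> set ts" "(X', Y', v) \<in> leaves t" unfolding T_def by auto
    show "X' \<subseteq> rectX T \<and> Y' \<subseteq> rectY T \<and> (\<forall>x\<in>X'. \<forall>y\<in>Y'. v = eval (ANode f l r) x y)"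
    proof (cases "t \<in> set ts0")
      case True
      then have "rectY t = Y" "rectX t \<subseteq> X0" "GT n \<gamma> B0 l t" using ts0(1) by auto
      then have "X' \<subseteq> X0" "Y' \<subseteq> Y" "\<forall>x\<in>X'. \<forall>y\<in>Y'. v = eval l x y"
        using t(2) unfolding GT_def by fastforce+
      then show ?thesis unfolding T_def X0_def by auto
    next
      case False
      then have "t \<in> set ts1" using t(1) unfolding ts_def by auto
      then have "rectY t = Y" "rectX t \<subseteq> X1" "GT n \<gamma> B0 r t" using ts1(1) by auto
      then have "X' \<subseteq> X1" "Y' \<subseteq> Y" "\<forall>x\<in>X'. \<forall>y\<in>Y'. v = eval r x y"
        using t(2) unfolding GT_def by fastforce+
      then show ?thesis unfolding T_def X1_def by auto
    qed
  qed
  have "X \<times> Y - cov T \<subseteq> (X0 \<times> Y - covs ts0) \<union> (X1 \<times> Y - covs ts1)"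
    unfolding T_def cov_GNode ts_def covs_append using X01(4) by auto
  then have "card (X \<times> Y - cov T) \<le> card ((X0 \<times> Y - covs ts0) \<union> (X1 \<times> Y - covs ts1))"
    by (rule card_mono[rotated]) (use sX(1) sY(1) X01 finite_subset in auto)
  also have "\<dots> \<le> card (X0 \<times> Y - covs ts0) + card (X1 \<times> Y - covs ts1)" by (rule card_Un_le)
  finally have "real (card (X \<times> Y - cov T)) \<le>
      real (card Y) * 3 ^ depth l * sqrt (card X) / sqrt B * (2 * sqrt (card X0)) +
      real (card Y) * 3 ^ depth r * sqrt (card X) / sqrt B * (2 * sqrt (card X1))"
    using ts0(3) ts1(3) by linarith
  also have "\<dots> \<le> real (card X) * real (card Y) * (3 * 3 ^ max (depth l) (depth r)) / sqrt B"
  proof (rule num2)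
    show "real (card X) = real (card X0) + real (card X1)"
      using card_Un_disjoint[of X0 X1] X01 sX(1) finite_subset by (metis of_nat_add)
    show "3 ^ depth l \<le> (3::real) ^ max (depth l) (depth r)" by (rule power_increasing) auto
    show "3 ^ depth r \<le> (3::real) ^ max (depth l) (depth r)" by (rule power_increasing) auto
  qed (use ANode.prems(3) in auto)
  also have "\<dots> = real (card X) * real (card Y) * 3 ^ depth (ANode f l r) / sqrt B" by simp
  finally have bnd: "real (card (X \<times> Y - cov T)) \<le> real (card X) * real (card Y) * 3 ^ depth (ANode f l r) / sqrt B" .
  have "GT n \<gamma> B0 (ANode f l r) T" unfolding GT_def using wf dep slc lv by blast
  then show ?case using bnd unfolding T_def by (intro exI[of _ "GNode X Y ts"]) simp
next
  case (BNode f l r)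
  note sX = struct_facts[OF BNode.prems(1)] and sY = struct_facts[OF BNode.prems(2)]
  define Y0 where "Y0 = {y\<in>Y. f y}"
  define Y1 where "Y1 = {y\<in>Y. \<not> f y}"
  have Y01: "Y0 \<subseteq> Y" "Y1 \<subseteq> Y" "Y0 \<inter> Y1 = {}" "Y0 \<union> Y1 = Y" unfolding Y0_def Y1_def by auto
  have fix01: "fixedon Y0 J" "fixedon Y1 J" using sY(5) Y01 unfolding fixedon_def by (blast+)
  obtain L0 where L0: "good_part n \<gamma> J Y0 L0"
    using density_restore[OF g _ sY(4) fix01(1)] Y01 sY(3) by blast
  obtain L1 where L1: "good_part n \<gamma> J Y1 L1"
    using density_restore[OF g _ sY(4) fix01(2)] Y01 sY(3) by blast
  have IHl: "\<exists>T. rectX T = X \<and> rectY T = P \<and> GT n \<gamma> B0 l T \<and>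
          real (card (X \<times> P - cov T)) \<le> real (card X * card P) * 3 ^ depth l / sqrt B'"
    if "structured n (J \<union> K) \<gamma> P" "K \<inter> J = {}" "1 \<le> B'" "inv n \<gamma> B0 X I P (J \<union> K) B'" for P K B'
    using BNode.IH(1)[OF BNode.prems(1) that(1) that(3,4)] by simp
  have IHr: "\<exists>T. rectX T = X \<and> rectY T = P \<and> GT n \<gamma> B0 r T \<and>
          real (card (X \<times> P - cov T)) \<le> real (card X * card P) * 3 ^ depth r / sqrt B'"
    if "structured n (J \<union> K) \<gamma> P" "K \<inter> J = {}" "1 \<le> B'" "inv n \<gamma> B0 X I P (J \<union> K) B'" for P K B'
    using BNode.IH(2)[OF BNode.prems(1) that(1) that(3,4)] by simp
  have "\<exists>ts. (\<forall>t\<in>set ts. rectX t = X \<and> rectY t \<subseteq> Y0 \<and> GT n \<gamma> B0 l t) \<and> disjB ts \<and>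
      real (card (X \<times> Y0 - covs ts)) \<le> real (card X) * 3 ^ depth l * sqrt (card Y) / sqrt B * (2 * sqrt (card Y0))"
    apply (rule bob_list[where c="3 ^ depth l" and R="GT n \<gamma> B0 l" and X=X and Y=Y and I=I and J=J and B=B and B0=B0 and n=n])
    apply simp
    apply (rule IHl; assumption)
    using sX(1) sY(1) BNode.prems(4,3) sY(2) B0 L0 Y01(1) by auto
  then obtain ts0 where ts0: "\<forall>t\<in>set ts0. rectX t = X \<and> rectY t \<subseteq> Y0 \<and> GT n \<gamma> B0 l t" "disjB ts0"
      "real (card (X \<times> Y0 - covs ts0)) \<le> real (card X) * 3 ^ depth l * sqrt (card Y) / sqrt B * (2 * sqrt (card Y0))"
    by blast
  have "\<exists>ts. (\<forall>t\<in>set ts. rectX t = X \<and> rectY t \<subseteq> Y1 \<and> GT n \<gamma> B0 r t) \<and> disjB ts \<and>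
      real (card (X \<times> Y1 - covs ts)) \<le> real (card X) * 3 ^ depth r * sqrt (card Y) / sqrt B * (2 * sqrt (card Y1))"
    apply (rule bob_list[where c="3 ^ depth r" and R="GT n \<gamma> B0 r" and X=X and Y=Y and I=I and J=J and B=B and B0=B0 and n=n])
    apply simp
    apply (rule IHr; assumption)
    using sX(1) sY(1) BNode.prems(4,3) sY(2) B0 L1 Y01(2) by auto
  then obtain ts1 where ts1: "\<forall>t\<in>set ts1. rectX t = X \<and> rectY t \<subseteq> Y1 \<and> GT n \<gamma> B0 r t" "disjB ts1"
      "real (card (X \<times> Y1 - covs ts1)) \<le> real (card X) * 3 ^ depth r * sqrt (card Y) / sqrt B * (2 * sqrt (card Y1))"
    by blast
  define ts where "ts = ts0 @ ts1"
  define T where "T = GNode X Y ts"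
  have dj: "disjB ts" unfolding ts_def
    by (rule disjB_append[OF ts0(2) ts1(2)]) (use ts0(1) ts1(1) Y01(3) in blast)
  have split: "bob_split X Y ts"
    unfolding bob_split_def
  proof (intro conjI)
    show "\<forall>t\<in>set ts. rectX t = X \<and> rectY t \<subseteq> Y" using ts0(1) ts1(1) Y01 unfolding ts_def by auto
    show "\<forall>i<length ts. \<forall>j<length ts. i \<noteq> j \<longrightarrow> rectY (ts ! i) \<inter> rectY (ts ! j) = {}"
      using disjB_nth[OF dj] by blast
  qed
  have GTc: "\<forall>t\<in>set ts. GT n \<gamma> B0 l t \<or> GT n \<gamma> B0 r t" using ts0(1) ts1(1) unfolding ts_def by auto
  have wf: "wf_nodes T" unfolding T_def using split GTc unfolding GT_def by auto
  have dep: "gdepth T \<le> depth (BNode f l r)"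
  proof -
    have "\<forall>t\<in>set ts. gdepth t \<le> max (depth l) (depth r)" using GTc unfolding GT_def by auto
    then show ?thesis unfolding T_def using gdepth_GNode_le by fastforce
  qed
  have cod: "real (card I + card J) \<le> log 2 B0 / (1 - \<gamma>)"
    using codim_ok[OF g(2) BNode.prems] .
  have slc: "subcube_like_codim_le n \<gamma> T (log 2 B0 / (1 - \<gamma>))"
    unfolding T_def slc_GNode subcube_like_wrt_def using cod BNode.prems(1,2) GTc unfolding GT_def by blast
  have lv: "\<forall>(X', Y', v)\<in>leaves T. X' \<subseteq> rectX T \<and> Y' \<subseteq> rectY T \<and>
      (\<forall>x\<in>X'. \<forall>y\<in>Y'. v = eval (BNode f l r) x y)"
  proof (clarify)
    fix X' Y' v assume "(X', Y', v) \<in> leaves T"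
    then obtain t where t: "t \<in> set ts" "(X', Y', v) \<in> leaves t" unfolding T_def by auto
    show "X' \<subseteq> rectX T \<and> Y' \<subseteq> rectY T \<and> (\<forall>x\<in>X'. \<forall>y\<in>Y'. v = eval (BNode f l r) x y)"
    proof (cases "t \<in> set ts0")
      case True
      then have "rectX t = X" "rectY t \<subseteq> Y0" "GT n \<gamma> B0 l t" using ts0(1) by auto
      then have "X' \<subseteq> X" "Y' \<subseteq> Y0" "\<forall>x\<in>X'. \<forall>y\<in>Y'. v = eval l x y"
        using t(2) unfolding GT_def by fastforce+
      then show ?thesis unfolding T_def Y0_def by auto
    next
      case False
      then have "t \<in> set ts1" using t(1) unfolding ts_def by auto
      then have "rectX t = X" "rectY t \<subseteq> Y1" "GT n \<gamma> B0 r t" using ts1(1) by auto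
      then have "X' \<subseteq> X" "Y' \<subseteq> Y1" "\<forall>x\<in>X'. \<forall>y\<in>Y'. v = eval r x y"
        using t(2) unfolding GT_def by fastforce+
      then show ?thesis unfolding T_def Y1_def by auto
    qed
  qed
  have "X \<times> Y - cov T \<subseteq> (X \<times> Y0 - covs ts0) \<union> (X \<times> Y1 - covs ts1)"
    unfolding T_def cov_GNode ts_def covs_append using Y01(4) by auto
  then have "card (X \<times> Y - cov T) \<le> card ((X \<times> Y0 - covs ts0) \<union> (X \<times> Y1 - covs ts1))"
    by (rule card_mono[rotated]) (use sX(1) sY(1) Y01 finite_subset in auto)
  also have "\<dots> \<le> card (X \<times> Y0 - covs ts0) + card (X \<times> Y1 - covs ts1)" by (rule card_Un_le)
  finally have "real (card (X \<times> Y - cov T)) \<le>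
      real (card X) * 3 ^ depth l * sqrt (card Y) / sqrt B * (2 * sqrt (card Y0)) +
      real (card X) * 3 ^ depth r * sqrt (card Y) / sqrt B * (2 * sqrt (card Y1))"
    using ts0(3) ts1(3) by linarith
  also have "\<dots> \<le> real (card Y) * real (card X) * (3 * 3 ^ max (depth l) (depth r)) / sqrt B"
  proof (rule num2)
    show "real (card Y) = real (card Y0) + real (card Y1)"
      using card_Un_disjoint[of Y0 Y1] Y01 sY(1) finite_subset by (metis of_nat_add)
    show "3 ^ depth l \<le> (3::real) ^ max (depth l) (depth r)" by (rule power_increasing) auto
    show "3 ^ depth r \<le> (3::real) ^ max (depth l) (depth r)" by (rule power_increasing) auto
  qed (use BNode.prems(3) in auto)
  also have "\<dots> = real (card X) * real (card Y) * 3 ^ depth (BNode f l r) / sqrt B" by (simp add: ac_simps)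
  finally have bnd: "real (card (X \<times> Y - cov T)) \<le> real (card X) * real (card Y) * 3 ^ depth (BNode f l r) / sqrt B" .
  have "GT n \<gamma> B0 (BNode f l r) T" unfolding GT_def using wf dep slc lv by blast
  then show ?case using bnd unfolding T_def by (intro exI[of _ "GNode X Y ts"]) simp
qed




lemma geval_cov:
  assumes "\<forall>(X', Y', v)\<in>leaves T. \<forall>x\<in>X'. \<forall>y\<in>Y'. v = eval p x y" "(x, y) \<in> cov T"
  shows "geval T x y = Some (eval p x y)"
proof -
  have ex: "\<exists>l. l \<in> leaves T \<and> x \<in> fst l \<and> y \<in> fst (snd l)"
    using assms(2) unfolding cov_def by auto
  then have c: "\<exists>(X, Y, v)\<in>leaves T. x \<in> X \<and> y \<in> Y" by auto
  define l where "l = (SOME l. l \<in> leaves T \<and> x \<in> fst l \<and> y \<in> fst (snd l))"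
  have l: "l \<in> leaves T \<and> x \<in> fst l \<and> y \<in> fst (snd l)"
    unfolding l_def by (rule someI_ex[OF ex])
  obtain X' Y' v where lv: "l = (X', Y', v)" by (cases l) auto
  have "v = eval p x y" using assms(1) l unfolding lv by auto
  moreover have "geval T x y = Some (snd (snd l))" unfolding geval_def l_def using c by simp
  ultimately show ?thesis unfolding lv by simp
qed

lemma structured_cube:
  assumes "\<gamma> < 1"
  shows "structured n {} \<gamma> (cube n)"
proof -
  have "replicate n True \<in> cube n" by (simp add: cube_def)
  then have ne: "cube n \<noteq> {}" by blast
  have sp: "spread_on n \<gamma> (cube n) ({..<n} - {})"
    unfolding spread_iff[OF finite_cube ne]
  proof (intro allI impI ballI)
    fix I z assume I: "I \<subseteq> {..<n} - {}" and z: "z \<in> cube n"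
    define A where "A = {x \<in> cube n. \<forall>i\<in>I. x ! i = z ! i}"
    have "fixedon A I" unfolding A_def fixedon_def by auto
    moreover have "A \<subseteq> cube n" unfolding A_def by auto
    ultimately have "card A \<le> 2 ^ (n - card I)" using card_fixed_le I by auto
    then have "real (cnt (cube n) I z) \<le> real (2 ^ (n - card I))" unfolding cnt_def A_def
      by (simp only: of_nat_le_iff)
    also have "\<dots> = 2 powr (real n - real (card I))"
    proof -
      have "card I \<le> card {..<n}" using I by (intro card_mono) auto
      then show ?thesis by (simp add: powr_realpow[symmetric] of_nat_diff)
    qed
    also have "\<dots> = 2 powr (- real (card I)) * 2 powr (real n)"
      by (simp add: powr_add[symmetric])
    also have "\<dots> \<le> 2 powr (- \<gamma> * real (card I)) * 2 powr (real n)"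
    proof (intro mult_right_mono)
      have "\<gamma> * real (card I) \<le> 1 * real (card I)"
        by (rule mult_right_mono) (use assms in auto)
      then have "- real (card I) \<le> - \<gamma> * real (card I)" by simp
      then show "2 powr (- real (card I)) \<le> 2 powr (- \<gamma> * real (card I))" by simp
    qed simp
    also have "\<dots> = 2 powr (- \<gamma> * real (card I)) * real (card (cube n))"
      by (simp add: card_cube powr_realpow)
    finally show "real (cnt (cube n) I z) \<le> 2 powr (- \<gamma> * real (card I)) * real (card (cube n))" .
  qed
  show ?thesis unfolding structured_def using ne sp by auto
qed

theorem mainTheorem4:
  fixes \<gamma> :: real and n d :: nat and \<Pi> :: "'o proto"
  assumes "0 < \<gamma>" and "\<gamma> < 1" and "depth \<Pi> = d"
  shows "\<exists>T :: 'o gproto.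
           wf_gproto n T \<and> gdepth T \<le> d \<and>
           subcube_like_codim_le n \<gamma> T (7 / (1 - \<gamma>) * real d) \<and>
           real (card {(x, y) \<in> cube n \<times> cube n. geval T x y \<noteq> Some (eval \<Pi> x y)})
             / 2 ^ (2 * n) \<le> exp (- real d)"
proof -
  define B0 :: real where "B0 = 128 ^ d"
  have B0: "B0 \<ge> 1" unfolding B0_def by simp
  then have B0nn: "B0 \<ge> 0" by simp
  have st: "structured n {} \<gamma> (cube n)" using structured_cube[OF assms(2)] .
  have rho1: "rho n (cube n) {} = 1"
    unfolding rho_def card_cube by (simp add: powr_realpow[symmetric] powr_add[symmetric])
  have iv: "inv n \<gamma> B0 (cube n) {} (cube n) {} B0" unfolding inv_def rho1 by simp
  obtain T where T: "rectX T = cube n" "rectY T = cube n" "GT n \<gamma> B0 \<Pi> T"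
    "real (card (cube n \<times> cube n - cov T)) \<le> real (card (cube n)) * real (card (cube n)) * 3 ^ depth \<Pi> / sqrt B0"
    using build[where pr=\<Pi>, OF assms(1,2) B0nn st st B0 iv] by blast
  have lg: "log 2 B0 / (1 - \<gamma>) = 7 / (1 - \<gamma>) * real d"
  proof -
    have "log 2 B0 = real d * log 2 128" unfolding B0_def by (simp add: log_nat_power)
    also have "log 2 (128::real) = 7"
    proof -
      have h: "(128::real) = 2 ^ 7" by simp
      show ?thesis using log_pow_cancel[of "2::real" 7] by simp
    qed
    finally show ?thesis by simp
  qed
  have lvs: "\<forall>(X', Y', v)\<in>leaves T. \<forall>x\<in>X'. \<forall>y\<in>Y'. v = eval \<Pi> x y"
    using T(3) unfolding GT_def by fast
  have sub: "{(x, y) \<in> cube n \<times> cube n. geval T x y \<noteq> Some (eval \<Pi> x y)} \<subseteq> cube n \<times> cube n - cov T"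
    using geval_cov[OF lvs] by auto
  have "card {(x, y) \<in> cube n \<times> cube n. geval T x y \<noteq> Some (eval \<Pi> x y)} \<le> card (cube n \<times> cube n - cov T)"
    by (rule card_mono[OF _ sub]) (simp add: finite_cube)
  then have "real (card {(x, y) \<in> cube n \<times> cube n. geval T x y \<noteq> Some (eval \<Pi> x y)})
      \<le> 2 ^ n * 2 ^ n * 3 ^ d / sqrt B0"
    using T(4) assms(3) unfolding card_cube by simp
  then have "real (card {(x, y) \<in> cube n \<times> cube n. geval T x y \<noteq> Some (eval \<Pi> x y)}) / 2 ^ (2 * n)
      \<le> 3 ^ d / sqrt B0"
    by (simp add: divide_le_eq power_mult power2_eq_square mult.commute)
  also have "\<dots> \<le> exp (- real d)"
  proof -
    have s9: "9 \<le> sqrt (128::real)" by (rule real_le_rsqrt) simp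
    have "sqrt B0 = sqrt 128 ^ d" unfolding B0_def by (simp add: real_sqrt_power)
    then have "9 ^ d \<le> sqrt B0" using s9 by (simp add: power_mono)
    then have "3 ^ d / sqrt B0 \<le> 3 ^ d / 9 ^ d"
      using B0 by (intro divide_left_mono) auto
    also have "\<dots> = (1 / 3) ^ d" by (simp add: power_divide[symmetric])
    also have "\<dots> \<le> exp (-1) ^ d"
    proof (rule power_mono)
      have "exp 1 \<le> (3::real)" by (rule exp_le)
      then show "1 / 3 \<le> exp (- 1 :: real)" by (simp add: exp_minus field_simps)
    qed simp
    also have "\<dots> = exp (- real d)" by (simp add: exp_of_nat_mult[symmetric])
    finally show ?thesis .
  qed
  finally have err: "real (card {(x, y) \<in> cube n \<times> cube n. geval T x y \<noteq> Some (eval \<Pi> x y)}) / 2 ^ (2 * n)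
      \<le> exp (- real d)" .
  show ?thesis
  proof (intro exI[of _ T] conjI)
    show "wf_gproto n T" unfolding wf_gproto_def using T(1,2,3) unfolding GT_def by simp
    show "gdepth T \<le> d" using T(3) assms(3) unfolding GT_def by simp
    show "subcube_like_codim_le n \<gamma> T (7 / (1 - \<gamma>) * real d)" using T(3) lg unfolding GT_def by simp
  qed (rule err)
qed


end
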